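(* Let $(\beta_{\rm sd},\beta_{\rm rd},\beta_{\rm sr})\in\mathbb{R}_+^3$ with $\beta_{\rm rd}>0$, and set $S=\mathsf{SNR}^{\beta_{\rm sd}}$, $I=\mathsf{SNR}^{\beta_{\rm rd}}$, $C=\mathsf{SNR}^{\beta_{\rm sr}}$. Then $$\liminf_{\mathsf{SNR}\to\infty}\frac{r^{\rm(LDA\text{-}HD)}}{\log(1+\mathsf{SNR})}\ge \beta_{\rm sd}+\frac{[\beta_{\rm rd}-\beta_{\rm sd}]^+[\beta_{\rm sr}-\beta_{\rm sd}]^+}{[\beta_{\rm rd}-\beta_{\rm sd}]^++[\beta_{\rm sr}-\beta_{\rm sd}]^+}$$ (with the fraction interpreted as $0$ when its denominator vanishes), i.e. the LDA rate achieves the gDoF upper bound of the G-HD-RC.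
   Context: $r^{\rm(LDA\text{-}HD)}:=\log(1+S)+\frac{\log(1+\frac{I}{1+S})\,D}{\log(1+\frac{I}{1+S})+D}$ with $D:=[\log(1+\frac{C}{1+S})-\log(1+\frac{S}{1+S})]^+$, an achievable rate of the Gaussian half-duplex relay channel $Y_r=\sqrt{C}X_s(1-S_r)+Z_r$, $Y_d=\sqrt S X_s+e^{j\theta}\sqrt I X_rS_r+Z_d$ (unit-power inputs, unit-variance independent complex Gaussian noises, relay state $S_r\in\{0,1\}$ with $0$ = listen, $1$ = transmit). $[x]^+=\max\{x,0\}$; logs base 2. *)

theory Defs
  imports "HOL-Analysis.Analysis"
begin

definition pos_part :: "real \<Rightarrow> real" where
  "pos_part x = max x 0"

definition D_LDA :: "real \<Rightarrow> real \<Rightarrow> real" where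
  "D_LDA S C = pos_part (log 2 (1 + C / (1 + S)) - log 2 (1 + S / (1 + S)))"

definition r_LDA_HD :: "real \<Rightarrow> real \<Rightarrow> real \<Rightarrow> real" where
  "r_LDA_HD S I C =
     log 2 (1 + S) +
     (log 2 (1 + I / (1 + S)) * D_LDA S C) / (log 2 (1 + I / (1 + S)) + D_LDA S C)"

end

theory Submission imports Defs "HOL-Analysis.Analysis" "HOL-Real_Asymp.Real_Asymp" begin

lemma sq:
  fixes f :: "real \<Rightarrow> real" and m :: real
  assumes m: "m \<ge> 0" and ev: "eventually (\<lambda>x. x powr m \<le> f x \<and> f x \<le> 3 * (1+x) powr m) at_top"
  shows "((\<lambda>x. ln (f x) / ln (1+x)) \<longlongrightarrow> m) at_top"
proof (rule tendsto_sandwich)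
  have l1: "((\<lambda>x::real. ln x / ln (1+x)) \<longlongrightarrow> 1) at_top" by real_asymp
  have l2: "((\<lambda>x::real. ln 3 / ln (1+x)) \<longlongrightarrow> 0) at_top" by real_asymp
  show "((\<lambda>x. m * (ln x / ln (1+x))) \<longlongrightarrow> m) at_top"
    using tendsto_mult_left[OF l1, of m] by (simp only: mult_1_right)
  show "((\<lambda>x. ln 3 / ln (1+x) + m) \<longlongrightarrow> m) at_top"
    using tendsto_add[OF l2 tendsto_const[of m]] by simp
  have ev2: "eventually (\<lambda>x::real. x > 1) at_top" by (rule eventually_gt_at_top)
  show "eventually (\<lambda>x. m * (ln x / ln (1+x)) \<le> ln (f x) / ln (1+x)) at_top"
    using ev ev2
  proof eventually_elim
    case (elim x)
    have p: "0 < x powr m" using elim by simp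
    have "ln (x powr m) \<le> ln (f x)" using elim p by (subst ln_le_cancel_iff) (auto intro: less_le_trans[OF p])
    hence "m * ln x \<le> ln (f x)" using elim by (simp add: ln_powr)
    moreover have "ln (1+x) > 0" using elim by simp
    ultimately show ?case by (simp add: divide_right_mono)
  qed
  show "eventually (\<lambda>x. ln (f x) / ln (1+x) \<le> ln 3 / ln (1+x) + m) at_top"
    using ev ev2
  proof eventually_elim
    case (elim x)
    have p: "0 < x powr m" using elim by simp
    have "ln (f x) \<le> ln (3 * (1+x) powr m)" using elim p by (subst ln_le_cancel_iff) (auto intro: less_le_trans[OF p])
    also have "\<dots> = ln 3 + m * ln (1+x)" using elim by (simp add: ln_mult ln_powr)
    finally have h: "ln (f x) \<le> ln 3 + m * ln (1+x)" .
    have pos: "ln (1+x) > 0" using elim by simp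
    have "ln (f x) / ln (1+x) \<le> (ln 3 + m * ln (1+x)) / ln (1+x)"
      using h pos by (simp add: divide_right_mono)
    also have "\<dots> = ln 3 / ln (1+x) + m" using pos by (simp add: field_simps)
    finally show ?case .
  qed
qed

lemma lim1:
  assumes "b \<ge> 0"
  shows "((\<lambda>x::real. ln (1 + x powr b) / ln (1+x)) \<longlongrightarrow> b) at_top"
proof (rule sq[OF assms])
  show "eventually (\<lambda>x. x powr b \<le> 1 + x powr b \<and> 1 + x powr b \<le> 3 * (1+x) powr b) at_top"
    using eventually_gt_at_top[of 1]
  proof eventually_elim
    case (elim x)
    have "x powr b \<le> (1+x) powr b" using elim assms by (intro powr_mono2) auto
    moreover have "1 \<le> (1+x) powr b" using elim assms by (simp add: ge_one_powr_ge_zero)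
    ultimately show ?case by simp
  qed
qed

lemma lim2:
  assumes "a \<ge> 0" "b \<ge> 0"
  shows "((\<lambda>x::real. ln (1 + x powr a + x powr b) / ln (1+x)) \<longlongrightarrow> max a b) at_top"
proof (rule sq)
  show "max a b \<ge> 0" using assms by simp
  show "eventually (\<lambda>x. x powr max a b \<le> 1 + x powr a + x powr b \<and> 1 + x powr a + x powr b \<le> 3 * (1+x) powr max a b) at_top"
    using eventually_gt_at_top[of 1]
  proof eventually_elim
    case (elim x)
    have m: "x powr a \<le> x powr max a b" "x powr b \<le> x powr max a b"
      using elim by (auto intro: powr_mono)
    have "x powr max a b \<le> (1+x) powr max a b" using elim assms by (intro powr_mono2) auto
    moreover have "1 \<le> (1+x) powr max a b" using elim assms by (simp add: ge_one_powr_ge_zero)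
    moreover have "x powr max a b = x powr a \<or> x powr max a b = x powr b" by (simp add: max_def)
    moreover have "0 \<le> x powr a" "0 \<le> x powr b" by auto
    ultimately show ?case using m by linarith
  qed
qed

lemma logratio: "log 2 y / log 2 z = ln y / ln z"
  by (simp add: log_def)

lemma lim_diff:
  assumes "a \<ge> 0" "b \<ge> 0"
  shows "((\<lambda>x::real. log 2 (1 + x powr a / (1 + x powr b)) / log 2 (1+x)) \<longlongrightarrow> pos_part (a - b)) at_top"
proof -
  have t: "((\<lambda>x::real. ln (1 + x powr b + x powr a) / ln (1+x) - ln (1 + x powr b) / ln (1+x))
       \<longlongrightarrow> max b a - b) at_top"
    by (intro tendsto_diff lim1 lim2 assms)
  have "max b a - b = pos_part (a - b)" by (simp add: pos_part_def max_def)
  moreover have "eventually (\<lambda>x. ln (1 + x powr b + x powr a) / ln (1+x) - ln (1 + x powr b) / ln (1+x)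
     = log 2 (1 + x powr a / (1 + x powr b)) / log 2 (1+x)) at_top"
    using eventually_gt_at_top[of 1]
  proof eventually_elim
    case (elim x)
    have p: "0 < 1 + x powr b" by (simp add: add_pos_nonneg)
    have "1 + x powr a / (1 + x powr b) = (1 + x powr b + x powr a) / (1 + x powr b)"
      using p by (simp add: field_simps)
    then have "ln (1 + x powr a / (1 + x powr b)) = ln (1 + x powr b + x powr a) - ln (1 + x powr b)"
    proof -
      have p2: "0 < 1 + x powr b + x powr a" using p by (simp add: add_pos_nonneg)
      show ?thesis using \<open>1 + x powr a / (1 + x powr b) = _\<close> ln_div p p2 by simp
    qed
    thus ?case by (simp add: logratio diff_divide_distrib)
  qed
  ultimately show ?thesis using t tendsto_cong by fastforce
qed

lemma lim_E:
  "((\<lambda>x::real. log 2 (1 + x powr b / (1 + x powr b)) / log 2 (1+x)) \<longlongrightarrow> 0) at_top"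
proof (rule tendsto_sandwich)
  show "((\<lambda>x::real. 0) \<longlongrightarrow> 0) at_top" by simp
  show "((\<lambda>x::real. ln 2 / ln (1+x)) \<longlongrightarrow> 0) at_top" by real_asymp
  show "eventually (\<lambda>x. 0 \<le> log 2 (1 + x powr b / (1 + x powr b)) / log 2 (1+x)) at_top"
    using eventually_gt_at_top[of 1]
  proof eventually_elim
    case (elim x)
    have p: "0 < 1 + x powr b" by (simp add: add_pos_nonneg)
    have q0: "0 \<le> x powr b / (1 + x powr b)" using p by simp
    have "0 \<le> log 2 (1 + x powr b / (1 + x powr b))" using q0 by (simp add: add_pos_nonneg)
    thus ?case using elim by (auto intro!: divide_nonneg_nonneg)
  qed
  show "eventually (\<lambda>x. log 2 (1 + x powr b / (1 + x powr b)) / log 2 (1+x) \<le> ln 2 / ln (1+x)) at_top"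
    using eventually_gt_at_top[of 1]
  proof eventually_elim
    case (elim x)
    have p: "0 < 1 + x powr b" by (simp add: add_pos_nonneg)
    have q: "x powr b / (1 + x powr b) \<le> 1" using p by simp
    have q0: "0 \<le> x powr b / (1 + x powr b)" using p by simp
    have "ln (1 + x powr b / (1 + x powr b)) \<le> ln 2" using q q0 by (subst ln_le_cancel_iff) (auto simp: add_pos_nonneg)
    moreover have "ln (1+x) > 0" using elim by simp
    ultimately show ?case by (simp add: logratio divide_right_mono)
  qed
qed

lemma pos_part_tendsto: "(f \<longlongrightarrow> l) F \<Longrightarrow> ((\<lambda>x. pos_part (f x)) \<longlongrightarrow> pos_part l) F"
  unfolding pos_part_def by (intro tendsto_max tendsto_const)

lemma pp2[simp]: "pos_part (pos_part y) = pos_part y" by (simp add: pos_part_def)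

lemma g_tendsto:
  fixes P Q :: "real \<Rightarrow> real"
  assumes P: "(P \<longlongrightarrow> p) F" and Q: "(Q \<longlongrightarrow> q) F" and p: "p \<ge> 0" and q: "q \<ge> 0"
    and ev: "eventually (\<lambda>x. P x \<ge> 0 \<and> Q x \<ge> 0) F"
  shows "((\<lambda>x. P x * Q x / (P x + Q x)) \<longlongrightarrow> p * q / (p + q)) F"
proof (cases "p + q = 0")
  case False
  show ?thesis by (intro tendsto_divide tendsto_mult tendsto_add P Q False)
next
  case True
  hence p0: "p = 0" using p q by simp
  have "((\<lambda>x. P x * Q x / (P x + Q x)) \<longlongrightarrow> 0) F"
  proof (rule tendsto_sandwich[of "\<lambda>x. 0" _ _ P])
    show "eventually (\<lambda>x. 0 \<le> P x * Q x / (P x + Q x)) F" using ev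
      by eventually_elim auto
    show "eventually (\<lambda>x. P x * Q x / (P x + Q x) \<le> P x) F" using ev
    proof eventually_elim
      case (elim x)
      show ?case
      proof (cases "P x + Q x = 0")
        case False
        hence pos: "P x + Q x > 0" using elim by simp
        have "P x * Q x \<le> P x * (P x + Q x)" using elim by (intro mult_left_mono) auto
        thus ?thesis using pos by (simp add: divide_le_eq)
      qed (use elim in simp)
    qed
  qed (use P p0 in auto)
  thus ?thesis using True by simp
qed

theorem proposition6:
  fixes b_sd b_rd b_sr :: real
  assumes "b_sd \<ge> 0" and "b_rd > 0" and "b_sr \<ge> 0"
  shows "ereal (b_sd + (pos_part (b_rd - b_sd) * pos_part (b_sr - b_sd)) /
                       (pos_part (b_rd - b_sd) + pos_part (b_sr - b_sd)))
         \<le> Liminf at_top (\<lambda>snr::real. ereal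
              (r_LDA_HD (snr powr b_sd) (snr powr b_rd) (snr powr b_sr) / log 2 (1 + snr)))"
proof -
  define L where "L x = log 2 (1 + x)" for x :: real
  define A where "A x = log 2 (1 + x powr b_sd) / L x" for x
  define P where "P x = log 2 (1 + x powr b_rd / (1 + x powr b_sd)) / L x" for x
  define Q where "Q x = pos_part (log 2 (1 + x powr b_sr / (1 + x powr b_sd)) / L x
      - log 2 (1 + x powr b_sd / (1 + x powr b_sd)) / L x)" for x
  have A: "(A \<longlongrightarrow> b_sd) at_top" unfolding A_def L_def logratio using lim1 assms(1) by simp
  have P: "(P \<longlongrightarrow> pos_part (b_rd - b_sd)) at_top" unfolding P_def L_def
    using lim_diff assms by simp
  have Q: "(Q \<longlongrightarrow> pos_part (b_sr - b_sd)) at_top" unfolding Q_def L_def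
    using pos_part_tendsto[OF tendsto_diff[OF lim_diff[of b_sr b_sd] lim_E[of b_sd]]] assms by simp
  have ev: "eventually (\<lambda>x. P x \<ge> 0 \<and> Q x \<ge> 0) at_top"
    using eventually_gt_at_top[of 1]
  proof eventually_elim
    case (elim x)
    have p: "0 < 1 + x powr b_sd" by (simp add: add_pos_nonneg)
    have "0 \<le> x powr b_rd / (1 + x powr b_sd)" using p by simp
    hence "0 \<le> log 2 (1 + x powr b_rd / (1 + x powr b_sd))" by (simp add: add_pos_nonneg)
    hence "P x \<ge> 0" unfolding P_def L_def using elim p by (auto intro!: divide_nonneg_nonneg)
    moreover have "Q x \<ge> 0" unfolding Q_def pos_part_def by simp
    ultimately show ?case by simp
  qed
  have lim: "((\<lambda>x. A x + P x * Q x / (P x + Q x)) \<longlongrightarrow>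
     b_sd + pos_part (b_rd - b_sd) * pos_part (b_sr - b_sd) / (pos_part (b_rd - b_sd) + pos_part (b_sr - b_sd))) at_top"
    by (intro tendsto_add A g_tendsto P Q ev) (auto simp: pos_part_def)
  have eq: "eventually (\<lambda>x. A x + P x * Q x / (P x + Q x) =
      r_LDA_HD (x powr b_sd) (x powr b_rd) (x powr b_sr) / log 2 (1 + x)) at_top"
    using eventually_gt_at_top[of 1]
  proof eventually_elim
    case (elim x)
    have Lp: "L x > 0" unfolding L_def using elim by simp
    define a where "a = log 2 (1 + x powr b_rd / (1 + x powr b_sd))"
    define d where "d = D_LDA (x powr b_sd) (x powr b_sr)"
    have Pd: "P x = a / L x" unfolding P_def a_def ..
    have Qd: "Q x = d / L x" unfolding Q_def d_def D_LDA_def pos_part_def using Lp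
      by (simp add: diff_divide_distrib[symmetric] max_divide_distrib_right)
    have "P x * Q x / (P x + Q x) = (a * d / (a + d)) / L x"
      unfolding Pd Qd using Lp by (cases "a + d = 0") (simp_all add: field_simps)
    thus ?case unfolding r_LDA_HD_def A_def a_def d_def L_def by (simp add: add_divide_distrib)
  qed
  have lim2: "((\<lambda>x. r_LDA_HD (x powr b_sd) (x powr b_rd) (x powr b_sr) / log 2 (1 + x)) \<longlongrightarrow>
     b_sd + pos_part (b_rd - b_sd) * pos_part (b_sr - b_sd) / (pos_part (b_rd - b_sd) + pos_part (b_sr - b_sd))) at_top"
    using tendsto_cong[OF eq] lim by simp
  show ?thesis
    using lim_imp_Liminf[OF trivial_limit_at_top_linorder lim2[THEN tendsto_ereal]]
    by simp
qed

end
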